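(* Let $k\in\mathbb{N}_0$ and $n_0 = \left[\frac{k+2}{3}\right]$, $n_1 = \left[\frac{k+1}{3}\right]$, $n_2 = \left[\frac{k}{3}\right]$. The monic biorthogonal polynomial $p_k$ of degree $k$ satisfies $$\int_{\mathbb{R}} p_k(x)\,x^i\,w_j(x)\,dx = 0\qquad\text{for } i=0,1,\dots,n_j-1,\ j=0,1,2.$$ Conversely, if $f$ is a monic polynomial of degree $k$ satisfying $\int_{\mathbb{R}} f(x)x^iw_j(x)\,dx=0$ for $i=0,\dots,n_j-1$, $j=0,1,2$, then $f=p_k$. That is, these relations characterize $p_k$ among all monic polynomials of degree $k$.
   Context: Standing assumptions: $V:\mathbb{R}\to\mathbb{R}$ is continuous, $W$ is a real polynomial of degree $4$ with positive leading coefficient, and $\tau\in\mathbb{R}$, $\tau\neq 0$, such that $\iint |x|^a|y|^b e^{-V(x)-W(y)+2\tau xy}\,dx\,dy<\infty$ for all integers $a,b\ge0$. Define $w_j(x) = \int_{\mathbb{R}} y^j e^{-V(x)-W(y)+2\tau xy}\,dy$ for $j=0,1,2$. The monic biorthogonal polynomial $p_k$ of degree $k$ is the unique monic polynomial of degree $k$ such that $\iint p_k(x)\,q(y)\,e^{-V(x)-W(y)+2\tau xy}\,dx\,dy=0$ for every polynomial $q$ of degree at most $k-1$ (equivalently, the $p_k$ in the unique pair of sequences of monic polynomials $(p_k),(q_j)$, $\deg p_k=k$, $\deg q_j=j$, with $\iint p_k(x)q_j(y)e^{-V(x)-W(y)+2\tau xy}dxdy=0$ for $j\ne k$). $[\cdot]$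 denotes the integer part. *)

theory Defs
  imports "HOL-Analysis.Analysis" "HOL-Computational_Algebra.Polynomial"
begin

definition jweight :: "(real \<Rightarrow> real) \<Rightarrow> real poly \<Rightarrow> real \<Rightarrow> real \<Rightarrow> real \<Rightarrow> real" where
  "jweight V W \<tau> x y = exp (- V x - poly W y + 2 * \<tau> * x * y)"

definition wj :: "(real \<Rightarrow> real) \<Rightarrow> real poly \<Rightarrow> real \<Rightarrow> nat \<Rightarrow> real \<Rightarrow> real" where
  "wj V W \<tau> j x = (\<integral>y. y ^ j * jweight V W \<tau> x y \<partial>lborel)"

definition biorth :: "(real \<Rightarrow> real) \<Rightarrow> real poly \<Rightarrow> real \<Rightarrow> nat \<Rightarrow> real poly \<Rightarrow> bool" where
  "biorth V W \<tau> k p \<longleftrightarrow>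
     (\<forall>q :: real poly. degree q < k \<longrightarrow>
        (\<integral>z. poly p (fst z) * poly q (snd z) * jweight V W \<tau> (fst z) (snd z) \<partial>(lborel \<Otimes>\<^sub>M lborel)) = 0)"

text \<open>The monic biorthogonal polynomial p_k of degree k (unique by the standing assumptions).\<close>
definition bop :: "(real \<Rightarrow> real) \<Rightarrow> real poly \<Rightarrow> real \<Rightarrow> nat \<Rightarrow> real poly" where
  "bop V W \<tau> k = (THE p. lead_coeff p = 1 \<and> degree p = k \<and> biorth V W \<tau> k p)"

end

theory Submission
  imports Defs "HOL-Analysis.Analysis" "HOL-Computational_Algebra.Polynomial"
begin

lemma rolle_count_aux:
  fixes H H' :: "real \<Rightarrow> real"
  assumes der: "\<And>x. (H has_real_derivative H' x) (at x)"
    and fin: "finite {x. H' x = 0}"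
    and S: "finite S" "S \<subseteq> {x. H x = 0}"
  shows "card S \<le> card {x. H' x = 0} + 1"
proof (cases "S = {}")
  case True then show ?thesis by simp
next
  case False
  define m where "m = Max S"
  have mS: "m \<in> S" using S False by (simp add: m_def)
  define S' where "S' = S - {m}"
  define nx where "nx a = Min {b\<in>S. a < b}" for a
  have nx: "nx a \<in> S \<and> a < nx a \<and> (\<forall>b\<in>S. a < b \<longrightarrow> nx a \<le> b)" if "a \<in> S'" for a
  proof -
    have ne: "{b\<in>S. a < b} \<noteq> {}" using that S mS unfolding S'_def m_def
      by (metis (mono_tags, lifting) DiffE Max_ge empty_iff insertI1 mem_Collect_eq order_le_imp_less_or_eq)
    have f: "finite {b\<in>S. a < b}" using S by simp
    show ?thesis using Min_in[OF f ne] Min_le[OF f] unfolding nx_def by auto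
  qed
  have cont: "continuous_on A H" for A
    using der by (meson DERIV_isCont continuous_at_imp_continuous_on)
  have ex: "\<exists>z. a < z \<and> z < nx a \<and> H' z = 0" if aS: "a \<in> S'" for a
  proof -
    have "a \<in> S" using aS S'_def by auto
    then have "H a = 0" "H (nx a) = 0" using nx[OF aS] S(2) by auto
    then have "H a = H (nx a)" by simp
    then obtain z where z: "a < z" "z < nx a" "DERIV H z :> 0"
      using Rolle[of a "nx a" H] nx[OF aS] cont der real_differentiable_def by blast
    then have "H' z = 0" using der DERIV_unique by blast
    then show ?thesis using z by blast
  qed
  define xi where "xi a = (SOME z. a < z \<and> z < nx a \<and> H' z = 0)" for a
  have xi: "a < xi a \<and> xi a < nx a \<and> H' (xi a) = 0" if "a \<in> S'" for a
    using someI_ex[OF ex[OF that]] unfolding xi_def by blast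
  have inj: "inj_on xi S'"
  proof (rule inj_onI)
    fix a b assume ab: "a \<in> S'" "b \<in> S'" "xi a = xi b"
    show "a = b"
    proof (rule ccontr)
      assume "a \<noteq> b"
      then consider "a < b" | "b < a" by linarith
      then show False
      proof cases
        case 1
        then have "nx a \<le> b" using nx[OF ab(1)] ab(2) S'_def by auto
        then show False using xi[OF ab(1)] xi[OF ab(2)] ab(3) by linarith
      next
        case 2
        then have "nx b \<le> a" using nx[OF ab(2)] ab(1) S'_def by auto
        then show False using xi[OF ab(1)] xi[OF ab(2)] ab(3) by linarith
      qed
    qed
  qed
  have "xi ` S' \<subseteq> {x. H' x = 0}" using xi by auto
  then have "card S' \<le> card {x. H' x = 0}"
    using card_inj_on_le[OF inj _ fin] by blast
  moreover have "card S = card S' + 1" using S mS unfolding S'_def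
    by (metis One_nat_def Suc_pred card_Diff_singleton card_gt_0_iff empty_iff add.commute plus_1_eq_Suc)
  ultimately show ?thesis by simp
qed

lemma rolle_count:
  fixes H H' :: "real \<Rightarrow> real"
  assumes der: "\<And>x. (H has_real_derivative H' x) (at x)"
    and fin: "finite {x. H' x = 0}"
  shows "finite {x. H x = 0} \<and> card {x. H x = 0} \<le> card {x. H' x = 0} + 1"
proof -
  have fz: "finite {x. H x = 0}"
  proof (rule ccontr)
    assume "infinite {x. H x = 0}"
    then obtain S where "finite S" "card S = card {x. H' x = 0} + 2" "S \<subseteq> {x. H x = 0}"
      using infinite_arbitrarily_large by blast
    then show False using rolle_count_aux[OF der fin] by fastforce
  qed
  then show ?thesis using rolle_count_aux[OF der fin fz] by simp
qed

lemma IVT0: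
  fixes f :: "real \<Rightarrow> real"
  assumes "continuous_on UNIV f" "u \<le> v" "f u * f v \<le> 0"
  shows "\<exists>y. u \<le> y \<and> y \<le> v \<and> f y = 0"
proof -
  have c: "continuous_on {u..v} f" using assms(1) continuous_on_subset by blast
  show ?thesis
  proof (cases "f u \<le> 0")
    case True
    then have "f v \<ge> 0 \<or> f u = 0" using assms(3) by (cases "f u = 0") (auto simp: mult_le_0_iff)
    then show ?thesis using IVT'[of f u 0 v, OF _ _ assms(2) c] True assms(2) by auto
  next
    case False
    then have "f v \<le> 0" using assms(3) by (auto simp: mult_le_0_iff)
    then show ?thesis using IVT2'[of f v 0 u, OF _ _ assms(2) c] False by auto
  qed
qed

lemma sign_pattern:
  fixes f :: "real \<Rightarrow> real"
  assumes "continuous_on UNIV f" "finite Z" "\<forall>x. f x = 0 \<longrightarrow> x \<in> Z"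
  shows "\<exists>p. p \<noteq> 0 \<and> degree p \<le> card Z \<and> (\<forall>x. 0 \<le> f x * poly p x)"
  using assms
proof (induction "card Z" arbitrary: f Z)
  case 0
  then have Z: "Z = {}" by simp
  then have nz: "f x \<noteq> 0" for x using 0 by auto
  show ?case
  proof (cases "f 0 > 0")
    case True
    have "f x > 0" for x
    proof (rule ccontr)
      assume "\<not> f x > 0"
      then have "f 0 * f x \<le> 0" "f x * f 0 \<le> 0" using True by (simp_all add: mult_le_0_iff)
      then show False using IVT0[OF 0(2), of 0 x] IVT0[OF 0(2), of x 0] nz
        by (cases "0 \<le> x") auto
    qed
    then show ?thesis by (intro exI[of _ "[:1:]"]) (auto simp: Z less_imp_le)
  next
    case False
    then have f0: "f 0 < 0" using nz[of 0] by simp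
    have "f x < 0" for x
    proof (rule ccontr)
      assume "\<not> f x < 0"
      then have "f 0 * f x \<le> 0" "f x * f 0 \<le> 0" using f0 by (simp_all add: mult_le_0_iff)
      then show False using IVT0[OF 0(2), of 0 x] IVT0[OF 0(2), of x 0] nz
        by (cases "0 \<le> x") auto
    qed
    then show ?thesis by (intro exI[of _ "[:-1:]"]) (auto simp: Z less_imp_le)
  qed
next
  case (Suc n Z f)
  note cf = Suc.prems(1)
  obtain z where zZ: "z \<in> Z" using Suc.hyps(2) by (metis card.empty ex_in_conv nat.distinct(1))
  define Z' where "Z' = Z - {z}"
  have cZ': "n = card Z'" using Suc.hyps(2) zZ Suc.prems(2) unfolding Z'_def by simp
  obtain d where d: "d > 0" "\<forall>w\<in>Z. w \<noteq> z \<longrightarrow> d \<le> dist z w"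
    using finite_set_avoid[OF Suc.prems(2)] by blast
  define a where "a = z - d/2"
  define b where "b = z + d/2"
  have ab: "a < z" "z < b" "a < b" using d by (auto simp: a_def b_def)
  have nozero: "f y \<noteq> 0" if "a \<le> y" "y \<le> b" "y \<noteq> z" for y
  proof
    assume "f y = 0"
    then have "y \<in> Z" using Suc.prems(3) by auto
    then have "d \<le> dist z y" using d that by auto
    then show False using that d unfolding a_def b_def dist_real_def by auto
  qed
  have fa: "f a \<noteq> 0" and fb: "f b \<noteq> 0" using nozero ab by auto
  define c where "c = (if f a * f b > 0 then 1 else (-1::real))"
  have cfab: "f a * (c * f b) > 0" using fa fb unfolding c_def
    by (auto simp: mult_less_0_iff zero_less_mult_iff)
  define L where "L x = f a + (x - a) / (b - a) * (c * f b - f a)" for x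
  define g where "g x = (if x \<le> a then f x else if x \<le> b then L x else c * f x)" for x
  have cL: "continuous_on A L" for A unfolding L_def using ab by (intro continuous_intros) auto
  have c2: "continuous_on {x \<in> UNIV. a \<le> x} (\<lambda>x. if x \<le> b then L x else c * f x)"
  proof (rule continuous_on_cases_le)
    show "continuous_on {x \<in> {x \<in> UNIV. a \<le> x}. x \<le> b} L" using cL by blast
    show "continuous_on {x \<in> {x \<in> UNIV. a \<le> x}. b \<le> x} (\<lambda>x. c * f x)"
      by (intro continuous_intros continuous_on_subset[OF cf]) auto
    show "continuous_on {x \<in> UNIV. a \<le> x} (\<lambda>x. x)" by (intro continuous_intros)
    show "\<And>x. x \<in> {x \<in> UNIV. a \<le> x} \<Longrightarrow> x = b \<Longrightarrow> L x = c * f x" using ab by (simp add: L_def)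
  qed
  have cg: "continuous_on UNIV g"
    unfolding g_def
  proof (rule continuous_on_cases_le)
    show "continuous_on {x \<in> UNIV. x \<le> a} f" using cf continuous_on_subset by blast
    show "continuous_on {x \<in> UNIV. a \<le> x} (\<lambda>x. if x \<le> b then L x else c * f x)" by (rule c2)
    show "continuous_on UNIV (\<lambda>x. x)" by (intro continuous_intros)
    show "\<And>x. x \<in> UNIV \<Longrightarrow> x = a \<Longrightarrow> f x = (if x \<le> b then L x else c * f x)" using ab by (simp add: L_def)
  qed
  have Lsign: "L x * f a > 0" if "a \<le> x" "x \<le> b" for x
  proof -
    define t where "t = (x - a) / (b - a)"
    have t: "0 \<le> t" "t \<le> 1" using that ab by (auto simp: t_def field_simps)
    have "L x = f a + t * (c * f b - f a)" by (simp add: L_def t_def)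
    then have Lx: "L x = (1 - t) * f a + t * (c * f b)" by (simp add: algebra_simps)
    have "L x * f a = (1 - t) * (f a * f a) + t * (f a * (c * f b))" unfolding Lx by (simp add: algebra_simps)
    moreover have "f a * f a > 0" using fa not_real_square_gt_zero by blast
    moreover have "(1 - t) * (f a * f a) + t * (f a * (c * f b)) > 0"
    proof (cases "t < 1")
      case True
      have "(1 - t) * (f a * f a) > 0" using True \<open>f a * f a > 0\<close> mult_pos_pos[of "1 - t" "f a * f a"] by linarith
      moreover have "t * (f a * (c * f b)) \<ge> 0" using t cfab mult_nonneg_nonneg[of t "f a * (c * f b)"] by linarith
      ultimately show ?thesis by linarith
    next
      case False
      then have "t = 1" using t by linarith
      then show ?thesis using cfab by simp
    qed
    ultimately show ?thesis by linarith
  qed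
  have gsign: "g x * f a > 0" if "a < x" "x \<le> b" for x
    using Lsign[of x] that by (simp add: g_def)
  have gzero: "\<forall>x. g x = 0 \<longrightarrow> x \<in> Z'"
  proof (intro allI impI)
    fix x assume gx: "g x = 0"
    show "x \<in> Z'"
    proof (cases "x \<le> a")
      case True
      then have "f x = 0" using gx by (simp add: g_def)
      then show ?thesis using Suc.prems(3) True ab unfolding Z'_def by auto
    next
      case False
      show ?thesis
      proof (cases "x \<le> b")
        case True
        then show ?thesis using gsign[of x] False gx by simp
      next
        case F2: False
        then have "f x = 0" using gx False c_def by (simp add: g_def split: if_splits)
        then show ?thesis using Suc.prems(3) F2 ab unfolding Z'_def by auto
      qed
    qed
  qed
  obtain p1 where p1: "p1 \<noteq> 0" "degree p1 \<le> card Z'" "\<forall>x. 0 \<le> g x * poly p1 x"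
    using Suc.hyps(1)[OF cZ' cg _ gzero] Suc.prems(2) unfolding Z'_def by auto
  have p1mid: "poly p1 x * f a \<ge> 0" if "a < x" "x \<le> b" for x
  proof -
    have "0 \<le> (g x * poly p1 x) * (g x * f a)"
      by (rule mult_nonneg_nonneg[OF p1(3)[rule_format] less_imp_le[OF gsign[OF that]]])
    then have "0 \<le> (g x * g x) * (poly p1 x * f a)" by (simp add: algebra_simps)
    moreover have "g x \<noteq> 0" using gsign[OF that] by auto
    then have "g x * g x > 0" using not_real_square_gt_zero by blast
    ultimately show ?thesis by (simp add: zero_le_mult_iff)
  qed
  have left: "f x * f a \<ge> 0" if ax: "a \<le> x" "x < z" for x
  proof (rule ccontr)
    assume "\<not> ?thesis"
    then have "f a * f x \<le> 0" by (simp add: mult.commute)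
    then obtain y where "a \<le> y" "y \<le> x" "f y = 0" using IVT0[OF cf ax(1)] by blast
    then show False using nozero[of y] ax ab by auto
  qed
  have right: "f x * f b \<ge> 0" if zx: "z < x" "x \<le> b" for x
  proof (rule ccontr)
    assume "\<not> ?thesis"
    then have "f x * f b \<le> 0" by simp
    then obtain y where "x \<le> y" "y \<le> b" "f y = 0" using IVT0[OF cf zx(2)] by blast
    then show False using nozero[of y] zx ab by auto
  qed
  have fa2: "f a * f a > 0" using fa not_real_square_gt_zero by blast
  show ?case
  proof (cases "f a * f b > 0")
    case True
    then have c1: "c = 1" by (simp add: c_def)
    have "0 \<le> f x * poly p1 x" for x
    proof -
      consider "x \<le> a" | "b < x" | "a < x" "x < z" | "x = z" | "z < x" "x \<le> b" by linarith
      then show ?thesis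
      proof cases
        case 1 then show ?thesis using p1(3)[rule_format, of x] by (simp add: g_def)
      next
        case 2 then show ?thesis using p1(3)[rule_format, of x] ab c1 by (simp add: g_def)
      next
        case 3
        have "0 \<le> (f x * f a) * (poly p1 x * f a)" using left[of x] p1mid[of x] 3 ab by simp
        then have "0 \<le> (f x * poly p1 x) * (f a * f a)" by (simp add: algebra_simps)
        then show ?thesis using fa2 by (simp add: zero_le_mult_iff)
      next
        case 4
        have "f z * f a \<ge> 0"
        proof (rule ccontr)
          assume "\<not> ?thesis"
          then have "f a * f z \<le> 0" by (simp add: mult.commute)
          then obtain y where "a \<le> y" "y \<le> z" "f y = 0" using IVT0[OF cf, of a z] ab by auto
          moreover have "f z \<noteq> 0" using \<open>\<not> f z * f a \<ge> 0\<close> by auto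
          ultimately show False using nozero[of y] ab by fastforce
        qed
        then have "0 \<le> (f x * f a) * (poly p1 x * f a)" using p1mid[of x] 4 ab by simp
        then have "0 \<le> (f x * poly p1 x) * (f a * f a)" by (simp add: algebra_simps)
        then show ?thesis using fa2 by (simp add: zero_le_mult_iff)
      next
        case 5
        have "0 \<le> (f x * f b) * (poly p1 x * f a)" using right[of x] p1mid[of x] 5 ab by simp
        then have "0 \<le> (f x * poly p1 x) * (f a * f b)" by (simp add: algebra_simps)
        then show ?thesis using True by (simp add: zero_le_mult_iff)
      qed
    qed
    then show ?thesis using p1 cZ' Suc.hyps(2) by (intro exI[of _ p1]) auto
  next
    case False
    then have c1: "c = -1" by (simp add: c_def)
    have fab: "f a * f b < 0" using False fa fb by (simp add: not_less order_le_less)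
    define p where "p = p1 * [:z, -1:]"
    have pp: "poly p x = poly p1 x * (z - x)" for x by (simp add: p_def algebra_simps)
    have "0 \<le> f x * poly p x" for x
    proof -
      consider "x \<le> a" | "b < x" | "a < x" "x < z" | "x = z" | "z < x" "x \<le> b" by linarith
      then show ?thesis
      proof cases
        case 1 then show ?thesis using p1(3)[rule_format, of x] ab unfolding pp
          by (simp add: g_def mult.assoc[symmetric])
      next
        case 2
        then have "0 \<le> - (f x * poly p1 x)" using p1(3)[rule_format, of x] ab c1 by (simp add: g_def)
        moreover have "z - x < 0" using 2 ab by simp
        ultimately show ?thesis unfolding pp
          by (metis mult.assoc mult_nonpos_nonpos neg_0_le_iff_le order_less_le)
      next
        case 3
        have "0 \<le> (f x * f a) * (poly p1 x * f a)" using left[of x] p1mid[of x] 3 ab by simp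
        then have "0 \<le> (f x * poly p1 x) * (f a * f a)" by (simp add: algebra_simps)
        then have "0 \<le> f x * poly p1 x" using fa2 by (simp add: zero_le_mult_iff)
        then show ?thesis unfolding pp using 3 by (simp add: mult.assoc[symmetric])
      next
        case 4 then show ?thesis unfolding pp by simp
      next
        case 5
        have "0 \<le> (f x * f b) * (poly p1 x * f a)" using right[of x] p1mid[of x] 5 ab by simp
        then have "0 \<le> (f x * poly p1 x) * (f a * f b)" by (simp add: algebra_simps)
        then have "f x * poly p1 x \<le> 0"
        proof (rule contrapos_pp)
          assume "\<not> f x * poly p1 x \<le> 0"
          then have "f x * poly p1 x > 0" by simp
          then have "(f x * poly p1 x) * (f a * f b) < 0" using fab by (rule mult_pos_neg)
          then show "\<not> 0 \<le> (f x * poly p1 x) * (f a * f b)" by simp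
        qed
        moreover have "z - x < 0" using 5 by simp
        ultimately show ?thesis unfolding pp
          by (metis mult.assoc mult_nonpos_nonpos order_less_le)
      qed
    qed
    moreover have lin: "[:z, -1:] \<noteq> (0::real poly)" by simp
    moreover have "p \<noteq> 0" using p1(1) lin unfolding p_def by (simp only: mult_eq_0_iff) simp
    moreover have "degree p \<le> card Z"
    proof -
      have "degree p = degree p1 + 1" unfolding p_def using p1(1) lin degree_mult_eq[of p1 "[:z, -1:]"] by simp
      then show ?thesis using p1(2) cZ' Suc.hyps(2) by simp
    qed
    ultimately show ?thesis by (intro exI[of _ p]) auto
  qed
qed

lemma lim0_at_top:
  fixes g :: "real \<Rightarrow> real"
  assumes ig: "integrable lborel g" and lim: "(g \<longlongrightarrow> L) at_top"
  shows "L = 0"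
proof (rule ccontr)
  assume L: "L \<noteq> 0"
  then have "\<bar>L\<bar>/2 > 0" by simp
  with lim have "eventually (\<lambda>x. dist (g x) L < \<bar>L\<bar>/2) at_top" by (rule tendstoD)
  then obtain B where B: "\<And>x. x \<ge> B \<Longrightarrow> dist (g x) L < \<bar>L\<bar>/2"
    by (auto simp: eventually_at_top_linorder)
  have gB: "\<bar>g x\<bar> \<ge> \<bar>L\<bar>/2" if "x \<ge> B" for x
    using B[OF that] abs_triangle_ineq[of "L - g x" "g x"] abs_minus_commute[of "g x" L]
    unfolding dist_real_def by linarith
  have ia: "integrable lborel (\<lambda>x. \<bar>g x\<bar>)" using ig by simp
  have bound: "real n * (\<bar>L\<bar>/2) \<le> (\<integral>x. \<bar>g x\<bar> \<partial>lborel)" for n :: nat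
  proof -
    have "(\<integral>x. indicator {B..B + real n} x * (\<bar>L\<bar>/2) \<partial>lborel) \<le> (\<integral>x. \<bar>g x\<bar> \<partial>lborel)"
    proof (rule integral_mono)
      show "integrable lborel (\<lambda>x. indicator {B..B + real n} x * (\<bar>L\<bar>/2))"
        by (intro integrable_mult_left integrable_real_indicator) auto
      show "integrable lborel (\<lambda>x. \<bar>g x\<bar>)" by (rule ia)
      show "indicator {B..B + real n} x * (\<bar>L\<bar>/2) \<le> \<bar>g x\<bar>" for x
        using gB[of x] by (auto split: split_indicator)
    qed
    moreover have "(\<integral>x. indicator {B..B + real n} x * (\<bar>L\<bar>/2) \<partial>lborel) = real n * (\<bar>L\<bar>/2)"
      by simp
    ultimately show ?thesis by simp
  qed
  obtain n :: nat where "(\<integral>x. \<bar>g x\<bar> \<partial>lborel) / (\<bar>L\<bar>/2) < real n"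
    using reals_Archimedean2 by blast
  then have "(\<integral>x. \<bar>g x\<bar> \<partial>lborel) < real n * (\<bar>L\<bar>/2)" using L by (simp add: field_simps)
  then show False using bound[of n] by simp
qed

lemma lim0_at_bot:
  fixes g :: "real \<Rightarrow> real"
  assumes ig: "integrable lborel g" and lim: "(g \<longlongrightarrow> L) at_bot"
  shows "L = 0"
proof -
  have "integrable lborel (\<lambda>x. g (0 + (-1) * x))"
    using lborel_integrable_real_affine_iff[of "-1" g 0] ig by simp
  then have i2: "integrable lborel (\<lambda>x. g (- x))" by simp
  have "((\<lambda>x. g (- x)) \<longlongrightarrow> L) at_top" using lim
    by (simp add: filterlim_at_bot_mirror)
  then show ?thesis using lim0_at_top[OF i2] by blast
qed

lemma ibp_zero:
  fixes g g' :: "real \<Rightarrow> real"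
  assumes der: "\<And>x. (g has_real_derivative g' x) (at x)"
    and cont: "continuous_on UNIV g'"
    and ig: "integrable lborel g" and ig': "integrable lborel g'"
  shows "integral\<^sup>L lborel g' = 0"
proof -
  have ftc: "(\<integral>x. indicator {a..b} x *\<^sub>R g' x \<partial>lborel) = g b - g a" if "a \<le> b" for a b
  proof (rule integral_FTC_atLeastAtMost[OF that])
    show "(g has_vector_derivative g' x) (at x within {a..b})" for x
      using der[of x] by (simp add: has_real_derivative_iff_has_vector_derivative has_vector_derivative_at_within)
    show "continuous_on {a..b} g'" using cont continuous_on_subset by blast
  qed
  have ftc': "(\<integral>x. indicator {a..b} x * g' x \<partial>lborel) = g b - g a" if "a \<le> b" for a b
    using ftc[OF that] by simp
  have si: "set_integrable lborel A g'" if "A \<in> sets lborel" for A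
    unfolding set_integrable_def using integrable_mult_indicator[OF that ig'] .
  have t1: "((\<lambda>b. set_lebesgue_integral lborel {0..b} g') \<longlongrightarrow> set_lebesgue_integral lborel {0..} g') at_top"
    by (rule tendsto_set_lebesgue_integral_at_top) (auto intro: si)
  have t2: "((\<lambda>a. set_lebesgue_integral lborel {a..0} g') \<longlongrightarrow> set_lebesgue_integral lborel {..0} g') at_bot"
    by (rule tendsto_set_lebesgue_integral_at_bot) (auto intro: si)
  define Ip where "Ip = set_lebesgue_integral lborel {0..} g'"
  define Im where "Im = set_lebesgue_integral lborel {..0} g'"
  have "((\<lambda>b. g 0 + set_lebesgue_integral lborel {0..b} g') \<longlongrightarrow> g 0 + Ip) at_top"
    unfolding Ip_def by (intro tendsto_intros t1)
  moreover have "eventually (\<lambda>b. g 0 + set_lebesgue_integral lborel {0..b} g' = g b) at_top"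
    using eventually_ge_at_top[of 0]
    by eventually_elim (simp add: set_lebesgue_integral_def ftc')
  ultimately have "(g \<longlongrightarrow> g 0 + Ip) at_top" by (blast intro: Lim_transform_eventually)
  then have p: "g 0 + Ip = 0" using lim0_at_top[OF ig] by blast
  have "((\<lambda>a. g 0 - set_lebesgue_integral lborel {a..0} g') \<longlongrightarrow> g 0 - Im) at_bot"
    unfolding Im_def by (intro tendsto_intros t2)
  moreover have "eventually (\<lambda>a. g 0 - set_lebesgue_integral lborel {a..0} g' = g a) at_bot"
    using eventually_le_at_bot[of 0]
    by eventually_elim (simp add: set_lebesgue_integral_def ftc')
  ultimately have "(g \<longlongrightarrow> g 0 - Im) at_bot" by (blast intro: Lim_transform_eventually)
  then have m: "g 0 - Im = 0" using lim0_at_bot[OF ig] by blast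
  have split: "g' x = indicator {..0} x * g' x + indicator {0<..} x * g' x" for x
    by (auto split: split_indicator)
  have "integral\<^sup>L lborel g' = (\<integral>x. indicator {..0} x * g' x + indicator {0<..} x * g' x \<partial>lborel)"
    by (rule arg_cong[where f="integral\<^sup>L lborel"]) (rule ext, rule split)
  also have "\<dots> = (\<integral>x. indicator {..0} x * g' x \<partial>lborel) + (\<integral>x. indicator {0<..} x * g' x \<partial>lborel)"
    using si[of "{..0}"] si[of "{0<..}"] by (intro Bochner_Integration.integral_add) (auto simp: set_integrable_def)
  also have "(\<integral>x. indicator {0<..} x * g' x \<partial>lborel) = (\<integral>x. indicator {0..} x * g' x \<partial>lborel)"
  proof (rule integral_cong_AE)
    show "(\<lambda>x. indicat_real {0<..} x * g' x) \<in> borel_measurable lborel"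
      using si[of "{0<..}"] unfolding set_integrable_def by (auto dest: borel_measurable_integrable)
    show "(\<lambda>x. indicat_real {0..} x * g' x) \<in> borel_measurable lborel"
      using si[of "{0..}"] unfolding set_integrable_def by (auto dest: borel_measurable_integrable)
    show "AE x in lborel. indicat_real {0<..} x * g' x = indicat_real {0..} x * g' x"
      using AE_lborel_singleton[of 0] by eventually_elim (auto split: split_indicator)
  qed
  finally show ?thesis using p m unfolding Ip_def Im_def set_lebesgue_integral_def by simp
qed

lemma poly_sign_roots:
  fixes q :: "real poly" assumes "q \<noteq> 0"
  shows "\<exists>rs \<sigma>. (\<sigma> = 1 \<or> \<sigma> = -1) \<and> length rs \<le> degree q \<and> (\<forall>y. 0 \<le> \<sigma> * poly q y * (\<Prod>r\<leftarrow>rs. (y - r)))"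
  using assms
proof (induction "degree q" arbitrary: q rule: less_induct)
  case less
  show ?case
  proof (cases "\<exists>r. poly q r = 0")
    case True
    then obtain r where r: "poly q r = 0" by blast
    then obtain q' where q': "q = [:-r, 1:] * q'" using poly_eq_0_iff_dvd by (metis dvdE)
    have q'0: "q' \<noteq> 0" using less.prems q' by auto
    have dq: "degree q = degree q' + 1" unfolding q' using q'0 degree_mult_eq[of "[:-r, 1:]" q'] by simp
    obtain rs \<sigma> where IH: "\<sigma> = 1 \<or> \<sigma> = -1" "length rs \<le> degree q'"
        "\<forall>y. 0 \<le> \<sigma> * poly q' y * (\<Prod>r\<leftarrow>rs. (y - r))"
      using less.hyps[of q'] dq q'0 by auto
    have "0 \<le> \<sigma> * poly q y * (\<Prod>r\<leftarrow>r # rs. (y - r))" for y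
    proof -
      have pq: "poly q y = (y - r) * poly q' y" by (simp add: q' algebra_simps)
      define P where "P = (\<Prod>r\<leftarrow>rs. (y - r))"
      have e: "(\<Prod>r\<leftarrow>r # rs. (y - r)) = (y - r) * P" by (simp add: P_def)
      have "\<sigma> * poly q y * ((y - r) * P) = (y - r)^2 * (\<sigma> * poly q' y * P)"
        unfolding pq power2_eq_square by (simp only: ac_simps)
      then have "\<sigma> * poly q y * (\<Prod>r\<leftarrow>r # rs. (y - r)) = (y - r)^2 * (\<sigma> * poly q' y * P)"
        unfolding e .
      moreover have "0 \<le> \<sigma> * poly q' y * P" using IH(3) P_def by simp
      ultimately show ?thesis by (metis zero_le_power2 mult_nonneg_nonneg)
    qed
    then show ?thesis using IH dq by (intro exI[of _ "r # rs"] exI[of _ \<sigma>]) auto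
  next
    case False
    have nz: "poly q y \<noteq> 0" for y using False by auto
    show ?thesis
    proof (cases "poly q 0 > 0")
      case True
      have "poly q y > 0" for y
      proof (rule ccontr)
        assume "\<not> poly q y > 0"
        then have "poly q y < 0" using nz[of y] by simp
        then show False using poly_IVT[of 0 y q] poly_IVT[of y 0 q] True nz
          by (cases y "0::real" rule: linorder_cases) (auto simp: mult_less_0_iff)
      qed
      then show ?thesis by (intro exI[of _ "[]"] exI[of _ 1]) (auto simp: less_imp_le)
    next
      case F: False
      then have q0: "poly q 0 < 0" using nz[of 0] by simp
      have "poly q y < 0" for y
      proof (rule ccontr)
        assume "\<not> poly q y < 0"
        then have "poly q y > 0" using nz[of y] by simp
        then show False using poly_IVT[of 0 y q] poly_IVT[of y 0 q] q0 nz
          by (cases y "0::real" rule: linorder_cases) (auto simp: mult_less_0_iff)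
      qed
      then show ?thesis by (intro exI[of _ "[]"] exI[of _ "-1"]) (auto simp: less_imp_le)
    qed
  qed
qed

lemma exp_quad_bound: "\<bar>exp u - 1 - u\<bar> \<le> u^2 * exp \<bar>u\<bar>" for u :: real
proof -
  obtain t where t: "\<bar>t\<bar> \<le> \<bar>u\<bar>" "exp u = (\<Sum>m<2. u ^ m / fact m) + exp t / fact 2 * u ^ 2"
    using Maclaurin_exp_le[of u 2] by blast
  have eq: "exp u - 1 - u = exp t / 2 * u^2" using t(2) by (simp add: numeral_2_eq_2)
  have "exp t \<le> exp \<bar>u\<bar>" using t(1) by simp
  have "\<bar>exp u - 1 - u\<bar> = \<bar>exp t / 2 * u^2\<bar>" by (simp only: eq)
  also have "\<dots> = exp t / 2 * u^2" by simp
  also have "\<dots> \<le> exp \<bar>u\<bar> * u^2"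
  proof (rule mult_right_mono)
    show "exp t / 2 \<le> exp \<bar>u\<bar>" using \<open>exp t \<le> exp \<bar>u\<bar>\<close> exp_gt_zero[of t] by linarith
  qed simp
  finally show ?thesis by (simp add: mult.commute)
qed

lemma deriv_from_quad_bound:
  fixes F :: "real \<Rightarrow> real"
  assumes "\<And>h. \<bar>h\<bar> \<le> 1 \<Longrightarrow> \<bar>F (t + h) - F t - h * D\<bar> \<le> K * h^2"
  shows "(F has_real_derivative D) (at t)"
proof -
  have K: "K \<ge> 0" using assms[of 1] abs_ge_zero[of "F (t + 1) - F t - 1 * D"] by simp
  have "((\<lambda>h. (F (t + h) - F t) / h) \<longlongrightarrow> D) (at 0)"
  proof (rule tendstoI)
    fix e :: real assume e: "e > 0"
    define d where "d = min 1 (e / (K + 1))"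
    have d: "d > 0" using e K by (simp add: d_def)
    have "\<forall>h. h \<noteq> 0 \<and> dist h 0 < d \<longrightarrow> dist ((F (t + h) - F t) / h) D < e"
    proof (intro allI impI)
      fix h :: real assume h: "h \<noteq> 0 \<and> dist h 0 < d"
      then have h1: "\<bar>h\<bar> \<le> 1" "\<bar>h\<bar> < e / (K + 1)" by (auto simp: d_def)
      have "(F (t + h) - F t) / h - D = (F (t + h) - F t - h * D) / h" using h by (simp add: field_simps)
      then have "\<bar>(F (t + h) - F t) / h - D\<bar> = \<bar>F (t + h) - F t - h * D\<bar> / \<bar>h\<bar>" by (simp add: abs_divide)
      also have "\<dots> \<le> K * h^2 / \<bar>h\<bar>" using assms[OF h1(1)] h by (simp add: divide_right_mono)
      also have "\<dots> = K * \<bar>h\<bar>"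
      proof -
        have e: "h * h = \<bar>h\<bar> * \<bar>h\<bar>" by simp
        have "K * h^2 / \<bar>h\<bar> = K * \<bar>h\<bar> * (\<bar>h\<bar> / \<bar>h\<bar>)" by (simp only: power2_eq_square e) (simp only: times_divide_eq_right mult.assoc)
        then show ?thesis using h by simp
      qed
      also have "\<dots> \<le> K * (e / (K + 1))" using h1 K by (intro mult_left_mono) auto
      also have "\<dots> < e" using K e by (simp add: field_simps)
      finally show "dist ((F (t + h) - F t) / h) D < e" by (simp add: dist_real_def)
    qed
    then show "eventually (\<lambda>h. dist ((F (t + h) - F t) / h) D < e) (at 0)"
      using d by (auto simp: eventually_at)
  qed
  then show ?thesis by (simp add: DERIV_def)
qed

locale lap =
  fixes \<phi> :: "real \<Rightarrow> real" and c :: real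
  assumes \<phi>_cont: "continuous_on UNIV \<phi>"
    and \<phi>_pos: "\<And>y. \<phi> y > 0"
    and c_nz: "c \<noteq> 0"
    and \<phi>_int: "\<And>t n. integrable lborel (\<lambda>y. \<bar>y\<bar>^n * \<phi> y * exp (c * t * y))"
begin

definition G :: "real poly \<Rightarrow> real \<Rightarrow> real" where
  "G q t = (\<integral>y. poly q y * \<phi> y * exp (c * t * y) \<partial>lborel)"

lemma meas: "(\<lambda>y. poly q y * \<phi> y * exp (c * t * y)) \<in> borel_measurable lborel"
  unfolding measurable_lborel2 by (intro borel_measurable_continuous_onI continuous_intros \<phi>_cont)

lemma int_mono: "integrable lborel (\<lambda>y. y^n * \<phi> y * exp (c * t * y))"
proof (rule Bochner_Integration.integrable_bound[OF \<phi>_int[of n t]])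
  show "(\<lambda>y. y^n * \<phi> y * exp (c * t * y)) \<in> borel_measurable lborel"
    unfolding measurable_lborel2 by (intro borel_measurable_continuous_onI continuous_intros \<phi>_cont)
  show "AE y in lborel. norm (y^n * \<phi> y * exp (c * t * y)) \<le> norm (\<bar>y\<bar>^n * \<phi> y * exp (c * t * y))"
    using \<phi>_pos by (auto simp: abs_mult power_abs less_imp_le)
qed

lemma int_poly: "integrable lborel (\<lambda>y. poly q y * \<phi> y * exp (c * t * y))"
proof -
  have e: "poly q y * \<phi> y * exp (c * t * y) = (\<Sum>i\<le>degree q. coeff q i * (y^i * \<phi> y * exp (c * t * y)))" for y
    unfolding poly_altdef sum_distrib_right by (simp add: mult.assoc)
  show ?thesis unfolding e by (intro Bochner_Integration.integrable_sum Bochner_Integration.integrable_mult_right int_mono)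
qed

lemma int_abs_poly: "integrable lborel (\<lambda>y. \<bar>poly q y\<bar> * \<phi> y * exp (c * t * y))"
proof -
  have "integrable lborel (\<lambda>y. \<bar>poly q y * \<phi> y * exp (c * t * y)\<bar>)" using int_poly by simp
  moreover have "\<bar>poly q y * \<phi> y * exp (c * t * y)\<bar> = \<bar>poly q y\<bar> * \<phi> y * exp (c * t * y)" for y
    using \<phi>_pos[of y] by (simp add: abs_mult)
  ultimately show ?thesis by simp
qed

lemma G_add: "G (p + q) t = G p t + G q t"
  unfolding G_def using int_poly[of p t] int_poly[of q t]
  by (simp add: distrib_right)

lemma G_smult: "G (smult a q) t = a * G q t"
  unfolding G_def by (simp add: mult.assoc)

lemma G_minus: "G (p - q) t = G p t - G q t"
  unfolding G_def using int_poly[of p t] int_poly[of q t]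
  by (simp add: left_diff_distrib)

lemma G_deriv: "(G q has_real_derivative c * G (pCons 0 q) t) (at t)"
proof (rule deriv_from_quad_bound)
  define q2 where "q2 = q * [:0, 0, 1:]"
  have pq2: "\<bar>poly q2 y\<bar> = \<bar>poly q y\<bar> * y^2" for y by (simp add: q2_def abs_mult power2_eq_square)
  define K where "K = c^2 * ((\<integral>y. \<bar>poly q2 y\<bar> * \<phi> y * exp (c * (t + 1) * y) \<partial>lborel) +
                            (\<integral>y. \<bar>poly q2 y\<bar> * \<phi> y * exp (c * (t - 1) * y) \<partial>lborel))"
  fix h :: real assume h: "\<bar>h\<bar> \<le> 1"
  have i1: "integrable lborel (\<lambda>y. poly q y * \<phi> y * exp (c * (t + h) * y))" by (rule int_poly)
  have i2: "integrable lborel (\<lambda>y. poly q y * \<phi> y * exp (c * t * y))" by (rule int_poly)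
  have i3: "integrable lborel (\<lambda>y. h * c * (y * poly q y * \<phi> y * exp (c * t * y)))"
    using int_poly[of "pCons 0 q" t] by (intro integrable_mult_right) simp
  have "G q (t + h) - G q t - h * (c * G (pCons 0 q) t) =
        (\<integral>y. poly q y * \<phi> y * exp (c * (t + h) * y) - poly q y * \<phi> y * exp (c * t * y)
              - h * c * (y * poly q y * \<phi> y * exp (c * t * y)) \<partial>lborel)"
  proof -
    have "(\<integral>y. poly q y * \<phi> y * exp (c * (t + h) * y) - poly q y * \<phi> y * exp (c * t * y)
              - h * c * (y * poly q y * \<phi> y * exp (c * t * y)) \<partial>lborel)
        = (\<integral>y. poly q y * \<phi> y * exp (c * (t + h) * y) - poly q y * \<phi> y * exp (c * t * y) \<partial>lborel)
          - (\<integral>y. h * c * (y * poly q y * \<phi> y * exp (c * t * y)) \<partial>lborel)"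
      using i1 i2 i3 by (intro Bochner_Integration.integral_diff Bochner_Integration.integrable_diff)
    also have "\<dots> = G q (t + h) - G q t - h * c * (\<integral>y. y * poly q y * \<phi> y * exp (c * t * y) \<partial>lborel)"
      unfolding G_def using i1 i2 by (subst Bochner_Integration.integral_diff) auto
    also have "(\<integral>y. y * poly q y * \<phi> y * exp (c * t * y) \<partial>lborel) = G (pCons 0 q) t"
      unfolding G_def by simp
    finally show ?thesis by simp
  qed
  also have "\<dots> = (\<integral>y. poly q y * \<phi> y * exp (c * t * y) * (exp (c * h * y) - 1 - c * h * y) \<partial>lborel)"
    by (rule Bochner_Integration.integral_cong) (auto simp: algebra_simps exp_add[symmetric])
  finally have eq: "G q (t + h) - G q t - h * (c * G (pCons 0 q) t) = \<dots>" .
  have bnd: "\<bar>poly q y * \<phi> y * exp (c * t * y) * (exp (c * h * y) - 1 - c * h * y)\<bar> \<le>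
        h^2 * (c^2 * (\<bar>poly q2 y\<bar> * \<phi> y * exp (c * (t + 1) * y) + \<bar>poly q2 y\<bar> * \<phi> y * exp (c * (t - 1) * y)))" for y
  proof -
    have e1: "\<bar>exp (c * h * y) - 1 - c * h * y\<bar> \<le> (c * h * y)^2 * exp \<bar>c * y\<bar>"
    proof -
      have "\<bar>c\<bar> * \<bar>h\<bar> * \<bar>y\<bar> \<le> \<bar>c\<bar> * 1 * \<bar>y\<bar>" using h by (intro mult_right_mono mult_left_mono) auto
      then have "exp \<bar>c * h * y\<bar> \<le> exp \<bar>c * y\<bar>" by (simp add: abs_mult)
      then have "(c * h * y)^2 * exp \<bar>c * h * y\<bar> \<le> (c * h * y)^2 * exp \<bar>c * y\<bar>"
        by (intro mult_left_mono) auto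
      then show ?thesis using exp_quad_bound[of "c * h * y"] by linarith
    qed
    have e2: "exp (c * t * y) * exp \<bar>c * y\<bar> \<le> exp (c * (t + 1) * y) + exp (c * (t - 1) * y)"
    proof (cases "c * y \<ge> 0")
      case True
      then have "exp (c * t * y) * exp \<bar>c * y\<bar> = exp (c * (t + 1) * y)" by (simp add: exp_add[symmetric] algebra_simps)
      then show ?thesis by simp
    next
      case False
      then have "exp (c * t * y) * exp \<bar>c * y\<bar> = exp (c * (t - 1) * y)" by (simp add: exp_add[symmetric] algebra_simps)
      then show ?thesis by simp
    qed
    have "\<bar>poly q y * \<phi> y * exp (c * t * y) * (exp (c * h * y) - 1 - c * h * y)\<bar>
        = \<bar>poly q y\<bar> * \<phi> y * exp (c * t * y) * \<bar>exp (c * h * y) - 1 - c * h * y\<bar>"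
      using \<phi>_pos[of y] by (simp add: abs_mult)
    also have "\<dots> \<le> \<bar>poly q y\<bar> * \<phi> y * exp (c * t * y) * ((c * h * y)^2 * exp \<bar>c * y\<bar>)"
      using e1 \<phi>_pos[of y] by (intro mult_left_mono) auto
    also have "\<dots> = h^2 * c^2 * (\<bar>poly q y\<bar> * y^2) * \<phi> y * (exp (c * t * y) * exp \<bar>c * y\<bar>)"
      by (simp add: power_mult_distrib algebra_simps)
    also have "\<dots> \<le> h^2 * c^2 * (\<bar>poly q y\<bar> * y^2) * \<phi> y * (exp (c * (t + 1) * y) + exp (c * (t - 1) * y))"
      using e2 \<phi>_pos[of y] by (intro mult_left_mono) auto
    also have "\<dots> = h^2 * (c^2 * (\<bar>poly q2 y\<bar> * \<phi> y * exp (c * (t + 1) * y) + \<bar>poly q2 y\<bar> * \<phi> y * exp (c * (t - 1) * y)))"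
      by (simp add: pq2 algebra_simps)
    finally show ?thesis .
  qed
  have iK: "integrable lborel (\<lambda>y. h^2 * (c^2 * (\<bar>poly q2 y\<bar> * \<phi> y * exp (c * (t + 1) * y) + \<bar>poly q2 y\<bar> * \<phi> y * exp (c * (t - 1) * y))))"
    by (intro integrable_mult_right Bochner_Integration.integrable_add int_abs_poly)
  have "\<bar>\<integral>y. poly q y * \<phi> y * exp (c * t * y) * (exp (c * h * y) - 1 - c * h * y) \<partial>lborel\<bar>
      \<le> (\<integral>y. h^2 * (c^2 * (\<bar>poly q2 y\<bar> * \<phi> y * exp (c * (t + 1) * y) + \<bar>poly q2 y\<bar> * \<phi> y * exp (c * (t - 1) * y))) \<partial>lborel)"
  proof (rule integral_abs_bound_integral)
    show "integrable lborel (\<lambda>y. poly q y * \<phi> y * exp (c * t * y) * (exp (c * h * y) - 1 - c * h * y))"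
    proof (rule Bochner_Integration.integrable_bound[OF iK])
      show "(\<lambda>y. poly q y * \<phi> y * exp (c * t * y) * (exp (c * h * y) - 1 - c * h * y)) \<in> borel_measurable lborel"
        unfolding measurable_lborel2 by (intro borel_measurable_continuous_onI continuous_intros \<phi>_cont)
      show "AE y in lborel. norm (poly q y * \<phi> y * exp (c * t * y) * (exp (c * h * y) - 1 - c * h * y)) \<le>
          norm (h^2 * (c^2 * (\<bar>poly q2 y\<bar> * \<phi> y * exp (c * (t + 1) * y) + \<bar>poly q2 y\<bar> * \<phi> y * exp (c * (t - 1) * y))))"
      proof (rule AE_I2)
        fix y
        have "0 \<le> h^2 * (c^2 * (\<bar>poly q2 y\<bar> * \<phi> y * exp (c * (t + 1) * y) + \<bar>poly q2 y\<bar> * \<phi> y * exp (c * (t - 1) * y)))"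
          using \<phi>_pos[of y] by (intro mult_nonneg_nonneg add_nonneg_nonneg) auto
        then show "norm (poly q y * \<phi> y * exp (c * t * y) * (exp (c * h * y) - 1 - c * h * y)) \<le>
          norm (h^2 * (c^2 * (\<bar>poly q2 y\<bar> * \<phi> y * exp (c * (t + 1) * y) + \<bar>poly q2 y\<bar> * \<phi> y * exp (c * (t - 1) * y))))"
          using bnd[of y] by (simp only: real_norm_def abs_of_nonneg)
      qed
    qed
  qed (use iK bnd in auto)
  also have "\<dots> = K * h^2"
  proof -
    have "(\<integral>y. h^2 * (c^2 * (\<bar>poly q2 y\<bar> * \<phi> y * exp (c * (t + 1) * y) + \<bar>poly q2 y\<bar> * \<phi> y * exp (c * (t - 1) * y))) \<partial>lborel)
       = h^2 * (c^2 * ((\<integral>y. \<bar>poly q2 y\<bar> * \<phi> y * exp (c * (t + 1) * y) \<partial>lborel) + (\<integral>y. \<bar>poly q2 y\<bar> * \<phi> y * exp (c * (t - 1) * y) \<partial>lborel)))"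
      by (simp only: Bochner_Integration.integral_mult_right_zero Bochner_Integration.integral_add[OF int_abs_poly int_abs_poly])
    then show ?thesis unfolding K_def by (simp only: ac_simps)
  qed
  finally show "\<bar>G q (t + h) - G q t - h * (c * G (pCons 0 q) t)\<bar> \<le> K * h^2" using eq by simp
qed


lemma G_cont: "continuous_on UNIV (G q)"
  using G_deriv by (meson DERIV_isCont continuous_at_imp_continuous_on)

lemma G_pos:
  assumes q: "q \<noteq> 0" and nn: "\<And>y. 0 \<le> poly q y"
  shows "G q t > 0"
proof -
  have nn': "0 \<le> poly q y * \<phi> y * exp (c * t * y)" for y
    using nn[of y] \<phi>_pos[of y] by simp
  have ge: "G q t \<ge> 0" unfolding G_def by (rule Bochner_Integration.integral_nonneg) (use nn' in auto)
  have "G q t \<noteq> 0"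
  proof
    assume "G q t = 0"
    then have "AE y in lborel. poly q y * \<phi> y * exp (c * t * y) = 0"
      unfolding G_def using integral_nonneg_eq_0_iff_AE[OF int_poly] nn' by auto
    then have a1: "AE y in lborel. y \<in> {y. poly q y = 0}"
      using \<phi>_pos by (auto elim!: eventually_mono) (metis exp_gt_zero less_irrefl)
    have a2: "AE y in lborel. y \<notin> {y. poly q y = 0}"
      using q by (intro AE_not_in finite_imp_null_set_lborel poly_roots_finite)
    have "AE y in lborel. y \<in> {y. poly q y = 0} \<and> y \<notin> {y. poly q y = 0}" using a1 a2 by (rule AE_conjI)
    then have "AE (y::real) in lborel. False" by simp
    then have "ae_filter (lborel::real measure) = bot" by (simp add: eventually_False)
    then have "emeasure lborel (space lborel :: real set) = 0" by (simp add: ae_filter_eq_bot_iff)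
    then show False by simp
  qed
  then show ?thesis using ge by simp
qed

lemma descartes:
  assumes "q \<noteq> 0" "\<forall>y. 0 \<le> poly q y * (\<Prod>r\<leftarrow>rs. (y - r))"
  shows "finite {t. G q t = 0} \<and> card {t. G q t = 0} \<le> length rs"
  using assms
proof (induction rs arbitrary: q)
  case Nil
  then have "G q t > 0" for t by (intro G_pos) auto
  then have "{t. G q t = 0} = {}" by (auto simp: less_le)
  then show ?case by simp
next
  case (Cons r rs q)
  define q1 where "q1 = [:-r, 1:] * q"
  have "[:-r, 1:] \<noteq> (0::real poly)" by simp
  then have q1nz: "q1 \<noteq> 0" using Cons.prems(1) unfolding q1_def by (simp only: mult_eq_0_iff) simp
  have pq1: "poly q1 y = (y - r) * poly q y" for y by (simp add: q1_def algebra_simps)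
  have "\<forall>y. 0 \<le> poly q1 y * (\<Prod>r\<leftarrow>rs. (y - r))"
  proof
    fix y
    have eq: "poly q1 y * (\<Prod>r\<leftarrow>rs. (y - r)) = poly q y * (\<Prod>r\<leftarrow>r # rs. (y - r))"
      by (simp add: pq1 algebra_simps)
    show "0 \<le> poly q1 y * (\<Prod>r\<leftarrow>rs. (y - r))" unfolding eq using Cons.prems(2) by blast
  qed
  from Cons.IH[OF q1nz this] have IH: "finite {t. G q1 t = 0}" "card {t. G q1 t = 0} \<le> length rs" by auto
  define H where "H t = exp (- c * r * t) * G q t" for t
  define H' where "H' t = c * exp (- c * r * t) * G q1 t" for t
  have Gq1: "G q1 t = G (pCons 0 q) t - r * G q t" for t
  proof -
    have "q1 = pCons 0 q - smult r q" by (simp add: q1_def)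
    then show ?thesis by (simp add: G_minus G_smult)
  qed
  have der: "(H has_real_derivative H' t) (at t)" for t
  proof -
    have d1: "((\<lambda>t. exp (- c * r * t)) has_real_derivative exp (- c * r * t) * (- c * r)) (at t)"
      by (auto intro!: derivative_eq_intros)
    have "(H has_real_derivative exp (- c * r * t) * (c * G (pCons 0 q) t) + exp (- c * r * t) * (- c * r) * G q t) (at t)"
      unfolding H_def by (rule DERIV_mult'[OF d1 G_deriv])
    moreover have "exp (- c * r * t) * (c * G (pCons 0 q) t) + exp (- c * r * t) * (- c * r) * G q t = H' t"
      unfolding H'_def Gq1 by (simp add: algebra_simps)
    ultimately show ?thesis by simp
  qed
  have z1: "{t. H' t = 0} = {t. G q1 t = 0}" using c_nz by (auto simp: H'_def)
  have z2: "{t. H t = 0} = {t. G q t = 0}" by (auto simp: H_def)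
  from rolle_count[OF der] IH z1 z2 show ?case by auto
qed

lemma G_zeros:
  assumes "q \<noteq> 0"
  shows "finite {t. G q t = 0} \<and> card {t. G q t = 0} \<le> degree q"
proof -
  obtain rs \<sigma> where rs: "\<sigma> = 1 \<or> \<sigma> = -1" "length rs \<le> degree q"
      "\<forall>y. 0 \<le> \<sigma> * poly q y * (\<Prod>r\<leftarrow>rs. (y - r))"
    using poly_sign_roots[OF assms] by blast
  have nz: "smult \<sigma> q \<noteq> 0" using rs(1) assms by auto
  have "\<forall>y. 0 \<le> poly (smult \<sigma> q) y * (\<Prod>r\<leftarrow>rs. (y - r))" using rs(3) by simp
  from descartes[OF nz this] have d: "finite {t. G (smult \<sigma> q) t = 0}" "card {t. G (smult \<sigma> q) t = 0} \<le> length rs"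
    by auto
  have "{t. G (smult \<sigma> q) t = 0} = {t. G q t = 0}" using rs(1) by (auto simp: G_smult)
  then show ?thesis using d rs(2) by auto
qed

end

locale bo =
  fixes V :: "real \<Rightarrow> real" and W :: "real poly" and \<tau> :: real
  assumes Vc: "continuous_on UNIV V" and dW: "degree W = 4" and lW: "lead_coeff W > 0"
    and tau: "\<tau> \<noteq> 0"
    and integ: "\<forall>a b :: nat. integrable (lborel \<Otimes>\<^sub>M lborel)
           (\<lambda>z. \<bar>fst z\<bar> ^ a * \<bar>snd z\<bar> ^ b * jweight V W \<tau> (fst z) (snd z))"
begin

abbreviation "J \<equiv> jweight V W \<tau>"

lemma J_eq: "J x y = exp (- V x) * exp (- poly W y) * exp (2 * \<tau> * x * y)"
  unfolding jweight_def exp_add[symmetric] by (simp add: algebra_simps)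

lemma J_pos: "J x y > 0" by (simp add: jweight_def)

lemma contV2: "continuous_on UNIV (\<lambda>z::real\<times>real. V (fst z))"
  by (rule continuous_on_compose2[OF Vc]) (auto intro: continuous_intros)

lemma meas2:
  assumes "continuous_on UNIV f"
  shows "(f :: real \<times> real \<Rightarrow> real) \<in> borel_measurable (lborel \<Otimes>\<^sub>M lborel)"
  unfolding lborel_prod measurable_lborel2 using assms by (rule borel_measurable_continuous_onI)

lemma contJ2: "continuous_on UNIV (\<lambda>z::real\<times>real. J (fst z) (snd z))"
  unfolding jweight_def by (intro continuous_intros contV2)

lemma int_mono2: "integrable (lborel \<Otimes>\<^sub>M lborel) (\<lambda>z. fst z ^ a * snd z ^ b * J (fst z) (snd z))"
proof (rule Bochner_Integration.integrable_bound[OF integ[rule_format, of a b]])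
  show "(\<lambda>z. fst z ^ a * snd z ^ b * J (fst z) (snd z)) \<in> borel_measurable (lborel \<Otimes>\<^sub>M lborel)"
    by (intro meas2 continuous_intros contJ2)
  show "AE z in lborel \<Otimes>\<^sub>M lborel. norm (fst z ^ a * snd z ^ b * J (fst z) (snd z))
          \<le> norm (\<bar>fst z\<bar> ^ a * \<bar>snd z\<bar> ^ b * J (fst z) (snd z))"
    using J_pos by (intro AE_I2) (simp add: abs_mult power_abs)
qed

definition B :: "real poly \<Rightarrow> real poly \<Rightarrow> real" where
  "B p q = (\<integral>z. poly p (fst z) * poly q (snd z) * J (fst z) (snd z) \<partial>(lborel \<Otimes>\<^sub>M lborel))"

lemma intB: "integrable (lborel \<Otimes>\<^sub>M lborel) (\<lambda>z. poly p (fst z) * poly q (snd z) * J (fst z) (snd z))"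
proof -
  have e: "poly p (fst z) * poly q (snd z) * J (fst z) (snd z) =
     (\<Sum>i\<le>degree p. \<Sum>j\<le>degree q. coeff p i * coeff q j * (fst z ^ i * snd z ^ j * J (fst z) (snd z)))" for z
  proof -
    have a: "poly p (fst z) * poly q (snd z) * J (fst z) (snd z) =
      (\<Sum>i\<le>degree p. coeff p i * fst z ^ i * (poly q (snd z) * J (fst z) (snd z)))"
      unfolding poly_altdef[of p] sum_distrib_right by (simp add: mult.assoc)
    have b: "poly q (snd z) * J (fst z) (snd z) = (\<Sum>j\<le>degree q. coeff q j * snd z ^ j * J (fst z) (snd z))"
      unfolding poly_altdef[of q] sum_distrib_right by (simp add: mult.assoc)
    show ?thesis unfolding a b sum_distrib_left by (intro sum.cong refl) (simp add: ac_simps)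
  qed
  show ?thesis unfolding e
    by (intro Bochner_Integration.integrable_sum Bochner_Integration.integrable_mult_right int_mono2)
qed

lemma B_fst: "B p q = (\<integral>x. (\<integral>y. poly p x * poly q y * J x y \<partial>lborel) \<partial>lborel)"
  using lborel_pair.integral_fst'[OF intB[of p q]] unfolding B_def by simp

lemma B_snd: "B p q = (\<integral>y. (\<integral>x. poly p x * poly q y * J x y \<partial>lborel) \<partial>lborel)"
proof -
  have "integrable (lborel \<Otimes>\<^sub>M lborel) (case_prod (\<lambda>x y. poly p x * poly q y * J x y))"
    using intB[of p q] by (simp add: case_prod_beta')
  from lborel_pair.integral_snd[OF this] show ?thesis unfolding B_def by (simp add: case_prod_beta')
qed

definition I :: "real poly \<Rightarrow> real \<Rightarrow> real" where
  "I s x = (\<integral>y. poly s y * J x y \<partial>lborel)"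

lemma B_I: "B p q = (\<integral>x. poly p x * I q x \<partial>lborel)"
  unfolding B_fst I_def by (simp add: mult.assoc)

lemma int_I: "integrable lborel (\<lambda>x. poly p x * I q x)"
proof -
  have "integrable lborel (\<lambda>x. \<integral>y. poly p (fst (x, y)) * poly q (snd (x, y)) * J (fst (x, y)) (snd (x, y)) \<partial>lborel)"
    by (rule lborel_pair.integrable_fst'[OF intB])
  then show ?thesis unfolding I_def by (simp add: mult.assoc)
qed

definition good :: "real \<Rightarrow> bool" where
  "good x \<longleftrightarrow> (\<forall>n. integrable lborel (\<lambda>y. y ^ n * J x y))"

lemma AE_good: "AE x in lborel. good x"
proof -
  have "AE x in lborel. integrable lborel (\<lambda>y. y ^ n * J x y)" for n
    using lborel_pair.AE_integrable_fst'[OF int_mono2[of 0 n]] by simp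
  then show ?thesis unfolding good_def by (simp add: AE_all_countable)
qed

lemma good_int:
  assumes "good x"
  shows "integrable lborel (\<lambda>y. poly s y * J x y)"
proof -
  have e: "poly s y * J x y = (\<Sum>i\<le>degree s. coeff s i * (y ^ i * J x y))" for y
    unfolding poly_altdef sum_distrib_right by (simp add: mult.assoc)
  show ?thesis unfolding e using assms unfolding good_def
    by (intro Bochner_Integration.integrable_sum Bochner_Integration.integrable_mult_right) auto
qed

lemma I_add: "good x \<Longrightarrow> I (p + q) x = I p x + I q x"
  unfolding I_def using good_int[of x p] good_int[of x q] by (simp add: distrib_right)

lemma I_diff: "good x \<Longrightarrow> I (p - q) x = I p x - I q x"
  unfolding I_def using good_int[of x p] good_int[of x q] by (simp add: left_diff_distrib)

lemma I_smult: "I (smult a p) x = a * I p x"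
  unfolding I_def by (simp add: mult.assoc)

lemma I_ibp:
  assumes gx: "good x"
  shows "I (pderiv W * r) x = I (pderiv r) x + 2 * \<tau> * x * I r x"
proof -
  define s where "s = pderiv r - pderiv W * r + smult (2 * \<tau> * x) r"
  define g where "g y = poly r y * J x y" for y
  define g' where "g' y = poly s y * J x y" for y
  have der: "(g has_real_derivative g' y) (at y)" for y
  proof -
    have dJ: "((\<lambda>y. J x y) has_real_derivative J x y * (- poly (pderiv W) y + 2 * \<tau> * x)) (at y)"
      unfolding jweight_def by (auto intro!: derivative_eq_intros poly_DERIV simp: algebra_simps)
    have "(g has_real_derivative poly r y * (J x y * (- poly (pderiv W) y + 2 * \<tau> * x)) + poly (pderiv r) y * J x y) (at y)"
      unfolding g_def by (rule DERIV_mult'[OF poly_DERIV dJ])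
    moreover have "poly r y * (J x y * (- poly (pderiv W) y + 2 * \<tau> * x)) + poly (pderiv r) y * J x y = g' y"
      unfolding g'_def s_def by (simp add: algebra_simps)
    ultimately show ?thesis by simp
  qed
  have cont: "continuous_on UNIV g'"
    unfolding g'_def jweight_def by (intro continuous_intros)
  have "integral\<^sup>L lborel g' = 0"
    by (rule ibp_zero[OF der cont]) (unfold g_def g'_def, (rule good_int[OF gx])+)
  then have "I s x = 0" unfolding I_def g'_def by simp
  moreover have "I s x = I (pderiv r) x - I (pderiv W * r) x + 2 * \<tau> * x * I r x"
    unfolding s_def using gx by (simp add: I_add I_diff I_smult)
  ultimately show ?thesis by simp
qed

lemma B_ibp: "2 * \<tau> * B (pCons 0 p) r = B p (pderiv W * r) - B p (pderiv r)"
proof -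
  have "B p (pderiv W * r) = (\<integral>x. poly p x * I (pderiv W * r) x \<partial>lborel)" by (rule B_I)
  also have "\<dots> = (\<integral>x. poly p x * I (pderiv r) x + 2 * \<tau> * (poly (pCons 0 p) x * I r x) \<partial>lborel)"
  proof (rule integral_cong_AE)
    show "(\<lambda>x. poly p x * I (pderiv W * r) x) \<in> borel_measurable lborel"
      using int_I by (rule borel_measurable_integrable)
    show "(\<lambda>x. poly p x * I (pderiv r) x + 2 * \<tau> * (poly (pCons 0 p) x * I r x)) \<in> borel_measurable lborel"
      using int_I[of p "pderiv r"] int_I[of "pCons 0 p" r] by (intro borel_measurable_integrable) auto
    show "AE x in lborel. poly p x * I (pderiv W * r) x = poly p x * I (pderiv r) x + 2 * \<tau> * (poly (pCons 0 p) x * I r x)"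
    proof (rule AE_mp[OF AE_good], intro AE_I2 impI)
      fix x assume gx: "good x"
      show "poly p x * I (pderiv W * r) x = poly p x * I (pderiv r) x + 2 * \<tau> * (poly (pCons 0 p) x * I r x)"
        unfolding I_ibp[OF gx] by (simp add: algebra_simps)
    qed
  qed
  also have "\<dots> = B p (pderiv r) + 2 * \<tau> * B (pCons 0 p) r"
    unfolding B_I using int_I[of p "pderiv r"] int_I[of "pCons 0 p" r] by simp
  finally show ?thesis by simp
qed

end

context bo
begin

lemma B_add_left: "B (p1 + p2) q = B p1 q + B p2 q"
  unfolding B_def using intB[of p1 q] intB[of p2 q] by (simp add: distrib_right)

lemma B_diff_left: "B (p1 - p2) q = B p1 q - B p2 q"
  unfolding B_def using intB[of p1 q] intB[of p2 q] by (simp add: left_diff_distrib)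

lemma B_smult_left: "B (smult a p) q = a * B p q"
  unfolding B_def by (simp add: mult.assoc)

lemma B_add_right: "B p (q1 + q2) = B p q1 + B p q2"
  unfolding B_def using intB[of p q1] intB[of p q2] by (simp add: distrib_left distrib_right)

lemma B_diff_right: "B p (q1 - q2) = B p q1 - B p q2"
  unfolding B_def using intB[of p q1] intB[of p q2] by (simp add: right_diff_distrib left_diff_distrib)

lemma B_smult_right: "B p (smult a q) = a * B p q"
proof -
  have "B p (smult a q) = (\<integral>z. a * (poly p (fst z) * poly q (snd z) * J (fst z) (snd z)) \<partial>(lborel \<Otimes>\<^sub>M lborel))"
    unfolding B_def by (simp add: ac_simps)
  then show ?thesis unfolding B_def by simp
qed

lemma B_sum_right: "B p q = (\<Sum>m\<le>degree q. coeff q m * B p (monom 1 m))"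
proof -
  have e: "poly p (fst z) * poly q (snd z) * J (fst z) (snd z) =
      (\<Sum>m\<le>degree q. coeff q m * (poly p (fst z) * poly (monom 1 m) (snd z) * J (fst z) (snd z)))" for z
    unfolding poly_altdef[of q] sum_distrib_left sum_distrib_right by (simp add: poly_monom ac_simps)
  have "B p q = (\<integral>z. (\<Sum>m\<le>degree q. coeff q m * (poly p (fst z) * poly (monom 1 m) (snd z) * J (fst z) (snd z))) \<partial>(lborel \<Otimes>\<^sub>M lborel))"
    unfolding B_def e ..
  also have "\<dots> = (\<Sum>m\<le>degree q. coeff q m * B p (monom 1 m))"
    unfolding B_def using intB
    by (subst Bochner_Integration.integral_sum) (auto intro!: Bochner_Integration.integrable_mult_right)
  finally show ?thesis .
qed

lemma B_zero_of_monoms: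
  assumes "\<forall>m<k. B f (monom 1 m) = 0" "degree q < k"
  shows "B f q = 0"
  using assms by (subst B_sum_right) (auto intro!: sum.neutral)

definition T :: "real poly \<Rightarrow> real poly" where
  "T r = smult (1 / (2 * \<tau>)) (pderiv W * r - pderiv r)"

lemma B_T: "B (pCons 0 p) r = B p (T r)"
proof -
  have "B p (T r) = (1 / (2 * \<tau>)) * (B p (pderiv W * r) - B p (pderiv r))"
    unfolding T_def by (simp add: B_smult_right B_diff_right)
  also have "\<dots> = (1 / (2 * \<tau>)) * (2 * \<tau> * B (pCons 0 p) r)" by (simp add: B_ibp)
  also have "\<dots> = B (pCons 0 p) r" using tau by simp
  finally show ?thesis by simp
qed

lemma deg_pderiv_W: "degree (pderiv W) = 3"
  using dW by (simp add: degree_pderiv)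

lemma deg_T: "degree (T r) \<le> degree r + 3"
proof -
  have "degree (pderiv W * r) \<le> degree r + 3"
    using degree_mult_le[of "pderiv W" r] deg_pderiv_W by simp
  moreover have "degree (pderiv r) \<le> degree r + 3" by (simp add: degree_pderiv)
  ultimately have "degree (pderiv W * r - pderiv r) \<le> degree r + 3"
    using degree_diff_le by blast
  then show ?thesis unfolding T_def using degree_smult_le order_trans by blast
qed

lemma T_monom:
  shows "degree (T (monom 1 d)) = d + 3" and "coeff (T (monom 1 d)) (d + 3) \<noteq> 0"
proof -
  have c1: "coeff (pderiv W * monom 1 d) (d + 3) = 4 * coeff W 4"
    by (simp add: mult.commute[of _ "monom 1 d"] coeff_monom_mult coeff_pderiv)
  have c2: "coeff (pderiv (monom 1 d)) (d + 3) = 0"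
    by (simp add: coeff_pderiv coeff_monom)
  have c: "coeff (T (monom 1 d)) (d + 3) = (1 / (2 * \<tau>)) * (4 * coeff W 4)"
    unfolding T_def by (simp add: c1 c2)
  have "coeff W 4 > 0" using lW dW by simp
  then show nz: "coeff (T (monom 1 d)) (d + 3) \<noteq> 0" unfolding c using tau by simp
  have "degree (T (monom 1 d)) \<le> d + 3" using deg_T[of "monom 1 d"] by (simp add: degree_monom_eq)
  moreover have "d + 3 \<le> degree (T (monom 1 d))" using nz by (rule le_degree)
  ultimately show "degree (T (monom 1 d)) = d + 3" by simp
qed

lemma B_T_pow: "B (monom 1 i * f) r = B f ((T ^^ i) r)"
proof (induction i arbitrary: r)
  case 0 then show ?case by (simp add: monom_0 one_pCons[symmetric])
next
  case (Suc i)
  have "monom 1 (Suc i) * f = pCons 0 (monom 1 i * f)" by (simp add: monom_Suc)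
  then have "B (monom 1 (Suc i) * f) r = B (monom 1 i * f) (T r)" by (simp add: B_T)
  also have "\<dots> = B f ((T ^^ i) (T r))" by (rule Suc.IH)
  finally show ?case by (simp add: funpow_Suc_right del: funpow.simps)
qed

lemma deg_T_pow: "degree ((T ^^ i) r) \<le> degree r + 3 * i"
proof (induction i)
  case 0 then show ?case by simp
next
  case (Suc i)
  then show ?case using deg_T[of "(T ^^ i) r"] by simp
qed

lemma idx_iff: "j < 3 \<Longrightarrow> (i < (k + 2 - j) div 3) \<longleftrightarrow> 3 * i + j < k" for i j k :: nat
proof -
  assume j: "j < 3"
  have "(i < (k + 2 - j) div 3) \<longleftrightarrow> Suc i \<le> (k + 2 - j) div 3" by auto
  also have "\<dots> \<longleftrightarrow> Suc i * 3 \<le> k + 2 - j" by (rule less_eq_div_iff_mult_less_eq) simp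
  also have "\<dots> \<longleftrightarrow> 3 * i + j < k" using j by auto
  finally show ?thesis .
qed

lemma biorth_iff: "biorth V W \<tau> k p \<longleftrightarrow> (\<forall>q. degree q < k \<longrightarrow> B p q = 0)"
  unfolding biorth_def B_def by simp

lemma claim1:
  assumes "\<forall>q. degree q < k \<longrightarrow> B f q = 0" "j < 3" "3 * i + j < k"
  shows "B (f * monom 1 i) (monom 1 j) = 0"
proof -
  have "B (f * monom 1 i) (monom 1 j) = B f ((T ^^ i) (monom 1 j))"
    by (simp add: mult.commute[of f] B_T_pow)
  moreover have "degree ((T ^^ i) (monom 1 j)) < k"
    using deg_T_pow[of i "monom 1 j"] assms(3) by (simp add: degree_monom_eq)
  ultimately show ?thesis using assms(1) by simp
qed

lemma claim2:
  assumes C: "\<forall>j<3. \<forall>i. 3 * i + j < k \<longrightarrow> B (f * monom 1 i) (monom 1 j) = 0"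
  shows "\<forall>i r. degree r = d \<longrightarrow> 3 * i + d < k \<longrightarrow> B (monom 1 i * f) r = 0"
proof (induction d rule: less_induct)
  case (less d)
  show ?case
  proof (intro allI impI)
    fix i :: nat and r :: "real poly" assume r: "degree r = d" "3 * i + d < k"
    show "B (monom 1 i * f) r = 0"
    proof (cases "d < 3")
      case True
      have "B (monom 1 i * f) r = (\<Sum>m\<le>degree r. coeff r m * B (monom 1 i * f) (monom 1 m))"
        by (rule B_sum_right)
      also have "\<dots> = 0"
      proof (intro sum.neutral ballI)
        fix m assume "m \<in> {..degree r}"
        then have "m < 3" "3 * i + m < k" using True r by auto
        then show "coeff r m * B (monom 1 i * f) (monom 1 m) = 0"
          using C by (simp add: mult.commute[of "monom 1 i"])
      qed
      finally show ?thesis .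
    next
      case False
      define m0 where "m0 = monom (1::real) (d - 3)"
      define Tm where "Tm = T m0"
      have dTm: "degree Tm = d" and cTm: "coeff Tm d \<noteq> 0"
        using T_monom[of "d - 3"] False unfolding Tm_def m0_def by auto
      define a where "a = coeff r d / coeff Tm d"
      define r' where "r' = r - smult a Tm"
      have cr': "coeff r' d = 0" using cTm by (simp add: r'_def a_def)
      have dr'le: "degree r' \<le> d"
        unfolding r'_def using r(1) dTm degree_diff_le[of r d "smult a Tm"] degree_smult_le[of a Tm] by simp
      have dr': "degree r' < d"
      proof (cases "r' = 0")
        case True then show ?thesis using False by simp
      next
        case F: False
        then have "degree r' \<noteq> d" using cr' by auto
        then show ?thesis using dr'le by simp
      qed
      have "r = r' + smult a Tm" by (simp add: r'_def)
      then have "B (monom 1 i * f) r = B (monom 1 i * f) r' + a * B (monom 1 i * f) Tm"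
        by (simp add: B_add_right B_smult_right)
      moreover have "B (monom 1 i * f) r' = 0"
        using less.IH[OF dr'] r(2) dr' by auto
      moreover have "B (monom 1 i * f) Tm = 0"
      proof -
        have "B (monom 1 i * f) Tm = B (pCons 0 (monom 1 i * f)) m0" by (simp add: Tm_def B_T)
        also have "pCons 0 (monom 1 i * f) = monom 1 (Suc i) * f" by (simp add: monom_Suc)
        also have "B (monom 1 (Suc i) * f) m0 = 0"
        proof -
          have "degree m0 = d - 3" "d - 3 < d" "3 * Suc i + (d - 3) < k"
            using False r(2) by (auto simp: m0_def degree_monom_eq)
          then show ?thesis using less.IH[of "d - 3"] by blast
        qed
        finally show ?thesis .
      qed
      ultimately show ?thesis by simp
    qed
  qed
qed

lemma cond_iff_biorth:
  "(\<forall>j<3. \<forall>i. 3 * i + j < k \<longrightarrow> B (f * monom 1 i) (monom 1 j) = 0) \<longleftrightarrow> (\<forall>q. degree q < k \<longrightarrow> B f q = 0)"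
proof
  assume C: "\<forall>j<3. \<forall>i. 3 * i + j < k \<longrightarrow> B (f * monom 1 i) (monom 1 j) = 0"
  show "\<forall>q. degree q < k \<longrightarrow> B f q = 0"
  proof (intro allI impI)
    fix q :: "real poly" assume "degree q < k"
    then have "B (monom 1 0 * f) q = 0" by (intro claim2[OF C, of "degree q", rule_format]) auto
    moreover have "monom 1 0 * f = f" by (simp add: monom_0)
    ultimately show "B f q = 0" by simp
  qed
next
  assume "\<forall>q. degree q < k \<longrightarrow> B f q = 0"
  then show "\<forall>j<3. \<forall>i. 3 * i + j < k \<longrightarrow> B (f * monom 1 i) (monom 1 j) = 0"
    using claim1 by blast
qed

end

lemma AE_finite_False:
  assumes "finite F" "AE (y::real) in lborel. y \<in> F"
  shows False
proof -
  have a2: "AE y in lborel. y \<notin> F" using assms(1) by (intro AE_not_in finite_imp_null_set_lborel)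
  have "AE y in lborel. y \<in> F \<and> y \<notin> F" using assms(2) a2 by (rule AE_conjI)
  then have "AE (y::real) in lborel. False" by simp
  then have "ae_filter (lborel::real measure) = bot" by (simp add: eventually_False)
  then have "emeasure lborel (space lborel :: real set) = 0" by (simp add: ae_filter_eq_bot_iff)
  then show False by simp
qed

lemma AE_ex_in:
  assumes "AE (t::real) in lborel. P t" "u < v"
  shows "\<exists>t. u < t \<and> t < v \<and> P t"
proof (rule ccontr)
  assume "\<not> ?thesis"
  then have sub: "{u<..<v} \<subseteq> {t. \<not> P t}" by auto
  from assms(1) obtain N where N: "{t \<in> space lborel. \<not> P t} \<subseteq> N" "emeasure lborel N = 0" "N \<in> sets lborel"
    by (rule AE_E)
  have "{u<..<v} \<subseteq> N" using sub N(1) by auto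
  then have "emeasure lborel {u<..<v} \<le> emeasure lborel N" by (intro emeasure_mono N(3))
  then show False using N(2) assms(2) by simp
qed

lemma ae_to_all:
  fixes \<phi> :: "real \<Rightarrow> real"
  assumes cont: "continuous_on UNIV \<phi>" and pos: "\<And>x. \<phi> x \<ge> 0"
    and ae: "AE t in lborel. integrable lborel (\<lambda>x. \<bar>x\<bar>^n * \<phi> x * exp (c * t * x))"
  shows "integrable lborel (\<lambda>x. \<bar>x\<bar>^n * \<phi> x * exp (c * t0 * x))"
proof -
  obtain a where a: "t0 - 1 < a" "a < t0" "integrable lborel (\<lambda>x. \<bar>x\<bar>^n * \<phi> x * exp (c * a * x))"
    using AE_ex_in[OF ae, of "t0 - 1" t0] by auto
  obtain b where b: "t0 < b" "b < t0 + 1" "integrable lborel (\<lambda>x. \<bar>x\<bar>^n * \<phi> x * exp (c * b * x))"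
    using AE_ex_in[OF ae, of t0 "t0 + 1"] by auto
  show ?thesis
  proof (rule Bochner_Integration.integrable_bound[OF Bochner_Integration.integrable_add[OF a(3) b(3)]])
    show "(\<lambda>x. \<bar>x\<bar>^n * \<phi> x * exp (c * t0 * x)) \<in> borel_measurable lborel"
      unfolding measurable_lborel2 by (intro borel_measurable_continuous_onI continuous_intros cont)
    show "AE x in lborel. norm (\<bar>x\<bar>^n * \<phi> x * exp (c * t0 * x))
        \<le> norm (\<bar>x\<bar>^n * \<phi> x * exp (c * a * x) + \<bar>x\<bar>^n * \<phi> x * exp (c * b * x))"
    proof (rule AE_I2)
      fix x
      have e: "exp (c * t0 * x) \<le> exp (c * a * x) + exp (c * b * x)"
      proof (cases "c * x \<ge> 0")
        case True
        have "(b - t0) * (c * x) \<ge> 0" using True b by simp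
        then have "c * t0 * x \<le> c * b * x" by (simp add: algebra_simps)
        then have "exp (c * t0 * x) \<le> exp (c * b * x)" by simp
        then show ?thesis using exp_gt_zero[of "c * a * x"] by linarith
      next
        case False
        have "(t0 - a) * (c * x) \<le> 0" using False a by (simp add: mult_nonneg_nonpos)
        then have "c * t0 * x \<le> c * a * x" by (simp add: algebra_simps)
        then have "exp (c * t0 * x) \<le> exp (c * a * x)" by simp
        then show ?thesis using exp_gt_zero[of "c * b * x"] by linarith
      qed
      have nn: "0 \<le> \<bar>x\<bar>^n * \<phi> x" using pos[of x] by simp
      have "\<bar>x\<bar>^n * \<phi> x * exp (c * t0 * x) \<le> \<bar>x\<bar>^n * \<phi> x * (exp (c * a * x) + exp (c * b * x))"
        using e nn by (rule mult_left_mono)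
      then show "norm (\<bar>x\<bar>^n * \<phi> x * exp (c * t0 * x))
        \<le> norm (\<bar>x\<bar>^n * \<phi> x * exp (c * a * x) + \<bar>x\<bar>^n * \<phi> x * exp (c * b * x))"
        using nn by (simp add: distrib_left)
    qed
  qed
qed

context bo
begin

lemma J_eq': "J x y = exp (- poly W y) * (exp (- V x) * exp (2 * \<tau> * y * x))"
proof -
  have "2 * \<tau> * x * y = 2 * \<tau> * y * x" by simp
  then show ?thesis unfolding J_eq by (simp only: ac_simps)
qed

lemma phi_int: "integrable lborel (\<lambda>x. \<bar>x\<bar>^n * exp (- V x) * exp (2 * \<tau> * t * x))"
proof (rule ae_to_all)
  show "continuous_on UNIV (\<lambda>x. exp (- V x))" by (intro continuous_intros Vc)
  show "\<And>x. exp (- V x) \<ge> 0" by simp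
  have "integrable (lborel \<Otimes>\<^sub>M lborel) (case_prod (\<lambda>x y. \<bar>x\<bar> ^ n * J x y))"
    using integ[rule_format, of n 0] by (simp add: case_prod_beta')
  from lborel_pair.AE_integrable_snd[OF this]
  have "AE y in lborel. integrable lborel (\<lambda>x. \<bar>x\<bar> ^ n * J x y)" .
  then show "AE t in lborel. integrable lborel (\<lambda>x. \<bar>x\<bar>^n * exp (- V x) * exp (2 * \<tau> * t * x))"
  proof (rule eventually_mono)
    fix y assume iy: "integrable lborel (\<lambda>x. \<bar>x\<bar> ^ n * J x y)"
    have eqf: "(\<lambda>x. \<bar>x\<bar> ^ n * J x y) = (\<lambda>x. exp (- poly W y) * (\<bar>x\<bar>^n * exp (- V x) * exp (2 * \<tau> * y * x)))"
      by (rule ext) (simp only: J_eq' ac_simps)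
    have "integrable lborel (\<lambda>x. exp (- poly W y) * (\<bar>x\<bar>^n * exp (- V x) * exp (2 * \<tau> * y * x)))"
      using iy unfolding eqf .
    then show "integrable lborel (\<lambda>x. \<bar>x\<bar>^n * exp (- V x) * exp (2 * \<tau> * y * x))"
      by (simp add: integrable_mult_left_iff)
  qed
qed

sublocale L: lap "\<lambda>x. exp (- V x)" "2 * \<tau>"
  by unfold_locales (auto intro!: continuous_intros Vc phi_int simp: tau)

lemma inner_H: "(\<integral>x. poly p x * poly s y * J x y \<partial>lborel) = poly s y * exp (- poly W y) * L.G p y"
proof -
  have eq: "(\<lambda>x. poly p x * poly s y * J x y) = (\<lambda>x. (poly s y * exp (- poly W y)) * (poly p x * exp (- V x) * exp (2 * \<tau> * y * x)))"
    by (rule ext) (simp only: J_eq' ac_simps)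
  show ?thesis unfolding L.G_def eq by (rule integral_mult_right_zero)
qed

lemma B_H: "B p s = (\<integral>y. poly s y * exp (- poly W y) * L.G p y \<partial>lborel)"
  unfolding B_snd inner_H ..

lemma int_H: "integrable lborel (\<lambda>y. poly s y * exp (- poly W y) * L.G p y)"
proof -
  have "integrable (lborel \<Otimes>\<^sub>M lborel) (case_prod (\<lambda>x y. poly p x * poly s y * J x y))"
    using intB[of p s] by (simp add: case_prod_beta')
  from lborel_pair.integrable_snd[OF this] show ?thesis unfolding inner_H .
qed

lemma nondeg:
  assumes p: "p \<noteq> 0"
  shows "\<exists>s. degree s \<le> degree p \<and> B p s \<noteq> 0"
proof -
  have Z: "finite {t. L.G p t = 0}" "card {t. L.G p t = 0} \<le> degree p"
    using L.G_zeros[OF p] by auto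
  obtain s where s: "s \<noteq> 0" "degree s \<le> card {t. L.G p t = 0}" "\<forall>x. 0 \<le> L.G p x * poly s x"
    using sign_pattern[OF L.G_cont Z(1)] by auto
  have nn: "0 \<le> poly s y * exp (- poly W y) * L.G p y" for y
  proof -
    have eq: "poly s y * exp (- poly W y) * L.G p y = exp (- poly W y) * (L.G p y * poly s y)" by (simp only: ac_simps)
    show ?thesis unfolding eq by (rule mult_nonneg_nonneg[OF _ s(3)[rule_format]]) simp
  qed
  have "B p s \<noteq> 0"
  proof
    assume "B p s = 0"
    then have "AE y in lborel. poly s y * exp (- poly W y) * L.G p y = 0"
      unfolding B_H using integral_nonneg_eq_0_iff_AE[OF int_H] nn by auto
    then have "AE y in lborel. y \<in> {y. poly s y = 0} \<union> {t. L.G p t = 0}"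
      by (rule eventually_mono) auto
    moreover have "finite ({y. poly s y = 0} \<union> {t. L.G p t = 0})"
      using poly_roots_finite[OF s(1)] Z(1) by auto
    ultimately show False using AE_finite_False by blast
  qed
  then show ?thesis using s(2) Z(2) by (intro exI[of _ s]) auto
qed

lemma surj:
  "\<exists>p. (\<forall>i\<ge>k. coeff p i = 0) \<and> (\<forall>m<k. B p (monom 1 m) = b m)"
proof (induction k arbitrary: b)
  case 0 then show ?case by (intro exI[of _ 0]) auto
next
  case (Suc k)
  obtain p0 where p0: "\<forall>i\<ge>k. coeff p0 i = 0" "\<forall>m<k. B p0 (monom 1 m) = B (monom 1 k) (monom 1 m)"
    using Suc.IH[of "\<lambda>m. B (monom 1 k) (monom 1 m)"] by blast
  define f where "f = monom 1 k - p0"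
  have cf: "coeff f k = 1" "\<forall>i>k. coeff f i = 0" using p0(1) by (auto simp: f_def coeff_monom)
  then have fnz: "f \<noteq> 0" by auto
  have df: "degree f = k" using cf by (metis degree_le le_degree order_antisym one_neq_zero)
  have Bf: "\<forall>m<k. B f (monom 1 m) = 0" using p0(2) by (simp add: f_def B_diff_left)
  have Bfk: "B f (monom 1 k) \<noteq> 0"
  proof
    assume "B f (monom 1 k) = 0"
    then have "\<forall>m<Suc k. B f (monom 1 m) = 0" using Bf less_Suc_eq by auto
    then have "\<forall>s. degree s < Suc k \<longrightarrow> B f s = 0" using B_zero_of_monoms by blast
    moreover obtain s where "degree s \<le> degree f" "B f s \<noteq> 0" using nondeg[OF fnz] by blast
    ultimately show False using df by auto
  qed
  obtain p1 where p1: "\<forall>i\<ge>k. coeff p1 i = 0" "\<forall>m<k. B p1 (monom 1 m) = b m"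
    using Suc.IH[of b] by blast
  define t where "t = (b k - B p1 (monom 1 k)) / B f (monom 1 k)"
  define p where "p = p1 + smult t f"
  have "\<forall>i\<ge>Suc k. coeff p i = 0" using p1(1) cf(2) by (auto simp: p_def)
  moreover have "\<forall>m<Suc k. B p (monom 1 m) = b m"
  proof (intro allI impI)
    fix m assume "m < Suc k"
    then consider "m < k" | "m = k" by linarith
    then show "B p (monom 1 m) = b m"
    proof cases
      case 1 then show ?thesis using p1(2) Bf by (simp add: p_def B_add_left B_smult_left)
    next
      case 2 then show ?thesis using Bfk by (simp add: p_def B_add_left B_smult_left t_def)
    qed
  qed
  ultimately show ?case by blast
qed

lemma exists_bo: "\<exists>f. lead_coeff f = 1 \<and> degree f = k \<and> (\<forall>q. degree q < k \<longrightarrow> B f q = 0)"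
proof -
  obtain p0 where p0: "\<forall>i\<ge>k. coeff p0 i = 0" "\<forall>m<k. B p0 (monom 1 m) = B (monom 1 k) (monom 1 m)"
    using surj[of k "\<lambda>m. B (monom 1 k) (monom 1 m)"] by blast
  define f where "f = monom 1 k - p0"
  have cf: "coeff f k = 1" "\<forall>i>k. coeff f i = 0" using p0(1) by (auto simp: f_def coeff_monom)
  have df: "degree f = k" using cf by (metis degree_le le_degree order_antisym one_neq_zero)
  have Bf: "\<forall>m<k. B f (monom 1 m) = 0" using p0(2) by (simp add: f_def B_diff_left)
  show ?thesis using cf df Bf B_zero_of_monoms by (intro exI[of _ f]) auto
qed

lemma unique_bo:
  assumes "lead_coeff f1 = 1" "degree f1 = k" "\<forall>q. degree q < k \<longrightarrow> B f1 q = 0"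
    and "lead_coeff f2 = 1" "degree f2 = k" "\<forall>q. degree q < k \<longrightarrow> B f2 q = 0"
  shows "f1 = f2"
proof (rule ccontr)
  assume ne: "f1 \<noteq> f2"
  define d where "d = f1 - f2"
  have dnz: "d \<noteq> 0" using ne by (simp add: d_def)
  have ck: "coeff d k = 0" using assms by (simp add: d_def)
  have dle: "degree d \<le> k" unfolding d_def using assms degree_diff_le[of f1 k f2] by simp
  have dlt: "degree d < k"
  proof -
    have "degree d \<noteq> k" using ck dnz by auto
    then show ?thesis using dle by simp
  qed
  obtain s where s: "degree s \<le> degree d" "B d s \<noteq> 0" using nondeg[OF dnz] by blast
  have "B d s = B f1 s - B f2 s" by (simp add: d_def B_diff_left)
  also have "\<dots> = 0" using assms(3,6) s(1) dlt by simp
  finally show False using s(2) by simp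
qed

lemma bop_eq:
  assumes "lead_coeff f = 1" "degree f = k" "\<forall>q. degree q < k \<longrightarrow> B f q = 0"
  shows "bop V W \<tau> k = f"
  unfolding bop_def
proof (rule the_equality)
  show "lead_coeff f = 1 \<and> degree f = k \<and> biorth V W \<tau> k f" using assms by (simp add: biorth_iff)
  show "\<And>p. lead_coeff p = 1 \<and> degree p = k \<and> biorth V W \<tau> k p \<Longrightarrow> p = f"
    using unique_bo assms by (auto simp: biorth_iff)
qed

lemma bop_props: "lead_coeff (bop V W \<tau> k) = 1 \<and> degree (bop V W \<tau> k) = k \<and>
     (\<forall>q. degree q < k \<longrightarrow> B (bop V W \<tau> k) q = 0)"
proof -
  obtain f where f: "lead_coeff f = 1" "degree f = k" "\<forall>q. degree q < k \<longrightarrow> B f q = 0"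
    using exists_bo by blast
  then show ?thesis using bop_eq[OF f] by simp
qed

lemma cond_integral:
  "(\<integral>x. poly f x * x ^ i * wj V W \<tau> j x \<partial>lborel) = B (f * monom 1 i) (monom 1 j)"
proof -
  have "poly f x * x ^ i * wj V W \<tau> j x = (\<integral>y. poly (f * monom 1 i) x * poly (monom 1 j) y * J x y \<partial>lborel)" for x
  proof -
    have eq: "(\<lambda>y. poly (f * monom 1 i) x * poly (monom 1 j) y * J x y) = (\<lambda>y. (poly f x * x ^ i) * (y ^ j * J x y))"
      by (rule ext) (simp only: poly_mult poly_monom mult_1 ac_simps)
    show ?thesis unfolding eq wj_def by (rule integral_mult_right_zero[symmetric])
  qed
  then show ?thesis unfolding B_fst by simp
qed

end

theorem lemma2p1:
  fixes V :: "real \<Rightarrow> real" and W :: "real poly" and \<tau> :: real and k :: nat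
  assumes "continuous_on UNIV V"
    and "degree W = 4" and "lead_coeff W > 0"
    and "\<tau> \<noteq> 0"
    and "\<forall>a b :: nat. integrable (lborel \<Otimes>\<^sub>M lborel)
           (\<lambda>z. \<bar>fst z\<bar> ^ a * \<bar>snd z\<bar> ^ b * jweight V W \<tau> (fst z) (snd z))"
  shows "(\<forall>j<3. \<forall>i < (k + 2 - j) div 3.
            (\<integral>x. poly (bop V W \<tau> k) x * x ^ i * wj V W \<tau> j x \<partial>lborel) = 0)
       \<and> (\<forall>f :: real poly. lead_coeff f = 1 \<and> degree f = k \<and>
            (\<forall>j<3. \<forall>i < (k + 2 - j) div 3.
               (\<integral>x. poly f x * x ^ i * wj V W \<tau> j x \<partial>lborel) = 0)
            \<longrightarrow> f = bop V W \<tau> k)"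
proof -
  interpret bo V W \<tau> using assms by unfold_locales auto
  have P1: "\<forall>j<3. \<forall>i < (k + 2 - j) div 3.
            (\<integral>x. poly (bop V W \<tau> k) x * x ^ i * wj V W \<tau> j x \<partial>lborel) = 0"
  proof (intro allI impI)
    fix j i :: nat assume j: "j < 3" and i: "i < (k + 2 - j) div 3"
    have "3 * i + j < k" using idx_iff[OF j] i by simp
    then show "(\<integral>x. poly (bop V W \<tau> k) x * x ^ i * wj V W \<tau> j x \<partial>lborel) = 0"
      unfolding cond_integral using claim1[of k "bop V W \<tau> k" j i] bop_props[of k] j by simp
  qed
  have P2: "\<forall>f :: real poly. lead_coeff f = 1 \<and> degree f = k \<and>
            (\<forall>j<3. \<forall>i < (k + 2 - j) div 3.
               (\<integral>x. poly f x * x ^ i * wj V W \<tau> j x \<partial>lborel) = 0)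
            \<longrightarrow> f = bop V W \<tau> k"
  proof (intro allI impI)
    fix f :: "real poly"
    assume f: "lead_coeff f = 1 \<and> degree f = k \<and>
            (\<forall>j<3. \<forall>i < (k + 2 - j) div 3.
               (\<integral>x. poly f x * x ^ i * wj V W \<tau> j x \<partial>lborel) = 0)"
    have "\<forall>j<3. \<forall>i. 3 * i + j < k \<longrightarrow> B (f * monom 1 i) (monom 1 j) = 0"
    proof (intro allI impI)
      fix j i :: nat assume j: "j < 3" and ij: "3 * i + j < k"
      then have "i < (k + 2 - j) div 3" using idx_iff[OF j] by simp
      then show "B (f * monom 1 i) (monom 1 j) = 0" using f j unfolding cond_integral by blast
    qed
    then have bq: "\<forall>q. degree q < k \<longrightarrow> B f q = 0" using cond_iff_biorth by blast
    have "bop V W \<tau> k = f" by (rule bop_eq) (use f bq in auto)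
    then show "f = bop V W \<tau> k" by simp
  qed
  show ?thesis using P1 P2 by blast
qed

end
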